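(* Let $d \geq 2$, $N, K \geq 1$ be integers, $\mathbf{y}_1,\ldots,\mathbf{y}_N \in \mathbb{R}^d$ with matrix $\mathbf{Y} = [\mathbf{y}_1,\ldots,\mathbf{y}_N]$, and $\rho_k^{[i]} \geq 0$ with $\sum_{k=1}^K \rho_k^{[i]} = 1$ for each $i$. Put $\mathbf{A}_k = \sum_{i} \rho_k^{[i]}\mathbf{y}_i\mathbf{y}_i^\mathrm{T}$, $\gamma_k = \sum_i \rho_k^{[i]}$, $\lambda_k = $ largest eigenvalue of $\mathbf{A}_k$, and assume $\gamma_k > 0$ for all $k$. For $S\subseteq[K]$ let $\sigma^2(S) = \big(\|\mathbf{Y}\|_\mathrm{F}^2 - \sum_{k\in S}\lambda_k\big)/\big(dN - \sum_{k\in S}\gamma_k\big)$ and $\mathcal{V} = \{S \subseteq [K] : \sigma^2(S) \leq \lambda_k/\gamma_k \text{ for all } k\in S\}$. Call $S$ saturated if $S \in \mathcal{V}$ and $\sigma^2(S) > \lambda_j/\gamma_j$ for all $j\in[K]\setminus S$. Then there exists a unique saturated set.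
   Context: $[K] = \{1,\ldots,K\}$; $\|\cdot\|_\mathrm{F}$ is the Frobenius norm. *)

theory Defs
  imports "HOL-Analysis.Analysis"
begin

definition is_eigenvalue :: "real^'n^'n \<Rightarrow> real \<Rightarrow> bool" where
  "is_eigenvalue A l \<longleftrightarrow> (\<exists>v. v \<noteq> 0 \<and> A *v v = l *\<^sub>R v)"

definition largest_eigenvalue :: "real^'n^'n \<Rightarrow> real" where
  "largest_eigenvalue A = Max {l. is_eigenvalue A l}"

definition outer :: "real^'n \<Rightarrow> real^'n^'n" where
  "outer y = (\<chi> a b. y $ a * y $ b)"

definition frob_sq :: "nat \<Rightarrow> (nat \<Rightarrow> real^'n) \<Rightarrow> real" where
  "frob_sq N y = (\<Sum>i\<in>{1..N}. \<Sum>a\<in>UNIV. (y i $ a)^2)"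

definition A_mat :: "nat \<Rightarrow> (nat \<Rightarrow> real^'n) \<Rightarrow> (nat \<Rightarrow> nat \<Rightarrow> real) \<Rightarrow> nat \<Rightarrow> real^'n^'n" where
  "A_mat N y \<rho> k = (\<Sum>i\<in>{1..N}. \<rho> k i *\<^sub>R outer (y i))"

definition gam :: "nat \<Rightarrow> (nat \<Rightarrow> nat \<Rightarrow> real) \<Rightarrow> nat \<Rightarrow> real" where
  "gam N \<rho> k = (\<Sum>i\<in>{1..N}. \<rho> k i)"

definition lam :: "nat \<Rightarrow> (nat \<Rightarrow> real^'n) \<Rightarrow> (nat \<Rightarrow> nat \<Rightarrow> real) \<Rightarrow> nat \<Rightarrow> real" where
  "lam N y \<rho> k = largest_eigenvalue (A_mat N y \<rho> k)"

definition sigma2 :: "nat \<Rightarrow> (nat \<Rightarrow> real^'n) \<Rightarrow> (nat \<Rightarrow> nat \<Rightarrow> real) \<Rightarrow> nat set \<Rightarrow> real" where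
  "sigma2 N y \<rho> S =
     (frob_sq N y - (\<Sum>k\<in>S. lam N y \<rho> k)) /
     (real CARD('n) * real N - (\<Sum>k\<in>S. gam N \<rho> k))"

definition Vset :: "nat \<Rightarrow> nat \<Rightarrow> (nat \<Rightarrow> real^'n) \<Rightarrow> (nat \<Rightarrow> nat \<Rightarrow> real) \<Rightarrow> nat set set" where
  "Vset K N y \<rho> = {S. S \<subseteq> {1..K} \<and>
      (\<forall>k\<in>S. sigma2 N y \<rho> S \<le> lam N y \<rho> k / gam N \<rho> k)}"

definition saturated :: "nat \<Rightarrow> nat \<Rightarrow> (nat \<Rightarrow> real^'n) \<Rightarrow> (nat \<Rightarrow> nat \<Rightarrow> real) \<Rightarrow> nat set \<Rightarrow> bool" where
  "saturated K N y \<rho> S \<longleftrightarrow> S \<in> Vset K N y \<rho> \<and>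
      (\<forall>j\<in>{1..K} - S. sigma2 N y \<rho> S > lam N y \<rho> j / gam N \<rho> j)"

end

theory Submission
  imports Defs
begin

definition sg :: "real \<Rightarrow> real \<Rightarrow> (nat \<Rightarrow> real) \<Rightarrow> (nat \<Rightarrow> real) \<Rightarrow> nat set \<Rightarrow> real" where
  "sg T D l g S = (T - sum l S) / (D - sum g S)"

definition sat :: "real \<Rightarrow> real \<Rightarrow> (nat \<Rightarrow> real) \<Rightarrow> (nat \<Rightarrow> real) \<Rightarrow> nat set \<Rightarrow> nat set \<Rightarrow> bool" where
  "sat T D l g I S \<longleftrightarrow> S \<subseteq> I \<and> (\<forall>k\<in>S. sg T D l g S \<le> l k / g k) \<and>
     (\<forall>j\<in>I - S. sg T D l g S > l j / g j)"

lemma sg_incr: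
  assumes fin: "finite S" "finite B" and dis: "S \<inter> B = {}" and ne: "B \<noteq> {}"
   and gp: "\<forall>j\<in>B. g j > 0" and d1: "D - sum g S > 0" and d2: "D - sum g (S \<union> B) > 0"
   and lt: "\<forall>j\<in>B. l j / g j < sg T D l g S"
  shows "sg T D l g S < sg T D l g (S \<union> B)"
proof -
  obtain s where s_def: "s = sg T D l g S" by blast
  have "\<forall>j\<in>B. l j < s * g j" using lt gp s_def by (simp add: pos_divide_less_eq)
  hence "sum l B < sum (\<lambda>j. s * g j) B" by (intro sum_strict_mono[OF fin(2) ne]) simp
  hence lb: "sum l B < s * sum g B" by (simp add: sum_distrib_left)
  have num: "T - sum l S = s * (D - sum g S)" using d1 s_def by (simp add: sg_def)
  have su: "sum l (S\<union>B) = sum l S + sum l B" "sum g (S\<union>B) = sum g S + sum g B"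
    using sum.union_disjoint[OF fin dis] by simp_all
  have "T - sum l (S\<union>B) > s * (D - sum g (S\<union>B))" using num lb su by (simp add: algebra_simps)
  hence "s < (T - sum l (S\<union>B)) / (D - sum g (S\<union>B))" using d2 by (simp add: pos_less_divide_eq)
  thus ?thesis by (simp add: sg_def s_def)
qed

lemma sg_ins:
  assumes "finite S" "m \<notin> S" "g m > 0" "D - sum g S > 0" "D - sum g (insert m S) > 0"
    "sg T D l g S \<le> l m / g m"
  shows "sg T D l g (insert m S) \<le> l m / g m"
proof -
  obtain r where r: "r = l m / g m" by blast
  have lm: "l m = r * g m" using assms(3) r by simp
  have "T - sum l S \<le> r * (D - sum g S)" using assms(4,6) r by (simp add: sg_def pos_divide_le_eq)
  hence "T - sum l (insert m S) \<le> r * (D - sum g (insert m S))"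
    using assms(1,2) lm by (simp add: algebra_simps)
  hence "(T - sum l (insert m S)) / (D - sum g (insert m S)) \<le> r"
    using assms(5) by (simp add: pos_divide_le_eq)
  thus ?thesis by (simp add: sg_def r)
qed

lemma sat_unique:
  "finite I \<Longrightarrow> (\<forall>k\<in>I. g k > 0) \<Longrightarrow> (\<forall>S\<subseteq>I. D - sum g S > 0) \<Longrightarrow> \<exists>!S. sat T D l g I S"
proof (induction "card I" arbitrary: I)
  case 0
  hence "I = {}" by simp
  then show ?case by (auto simp: sat_def)
next
  case (Suc n)
  let ?r = "\<lambda>k. l k / g k"
  let ?s = "sg T D l g"
  have ne: "I \<noteq> {}" using Suc(2) by auto
  obtain m where mI: "m \<in> I" and mmin: "\<forall>k\<in>I. ?r m \<le> ?r k"
  proof -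
    have "Min (?r ` I) \<in> ?r ` I" using Suc(3) ne by simp
    then obtain m where "m \<in> I" "?r m = Min (?r ` I)" by auto
    moreover have "\<forall>k\<in>I. Min (?r ` I) \<le> ?r k" using Suc(3) by simp
    ultimately show ?thesis using that by metis
  qed
  define I' where "I' = I - {m}"
  have cI': "n = card I'" using Suc(2) mI by (simp add: I'_def)
  have fI': "finite I'" using Suc(3) by (simp add: I'_def)
  have "\<exists>!S. sat T D l g I' S"
  proof (rule Suc(1)[OF cI' fI'])
    show "\<forall>k\<in>I'. 0 < g k" using Suc(4) by (auto simp: I'_def)
    show "\<forall>S\<subseteq>I'. D - sum g S > 0" using Suc(5) by (auto simp: I'_def)
  qed
  then obtain S' where S': "sat T D l g I' S'" and S'u: "\<And>S. sat T D l g I' S \<Longrightarrow> S = S'" by blast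
  have II': "I = insert m I'" "m \<notin> I'" using mI by (auto simp: I'_def)
  have fin: "\<And>S. S \<subseteq> I \<Longrightarrow> finite S" using Suc(3) finite_subset by blast
  have den: "\<And>S. S \<subseteq> I \<Longrightarrow> D - sum g S > 0" using Suc(5) by blast
  have mS: "S = I" if "sat T D l g I S" "m \<in> S" for S
  proof (rule ccontr)
    assume "S \<noteq> I"
    moreover have "S \<subseteq> I" using that(1) by (simp add: sat_def)
    ultimately obtain j where "j \<in> I - S" by blast
    hence "?s S > ?r j" "?s S \<le> ?r m" "?r m \<le> ?r j" using that mmin by (auto simp: sat_def)
    thus False by simp
  qed
  have nmS: "sat T D l g I' S" if "sat T D l g I S" "m \<notin> S" for S
    using that by (auto simp: sat_def I'_def)
  show ?case
  proof (cases "?s S' > ?r m")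
    case True
    have satS': "sat T D l g I S'" using S' True II' by (auto simp: sat_def)
    have "S = S'" if sS: "sat T D l g I S" for S
    proof (cases "m \<in> S")
      case True
      hence "S = I" using mS sS by blast
      hence le: "?s I \<le> ?r m" using sS mI by (auto simp: sat_def)
      have sub: "S' \<subseteq> I" using satS' by (simp add: sat_def)
      have eqI: "S' \<union> (I - S') = I" using sub by auto
      have "?s S' < ?s (S' \<union> (I - S'))"
      proof (rule sg_incr)
        show "D - sum g (S' \<union> (I - S')) > 0" unfolding eqI by (rule den) simp
        show "D - sum g S' > 0" using den sub by blast
        show "finite S'" "finite (I - S')" using fin sub by auto
        show "S' \<inter> (I - S') = {}" by auto
        show "I - S' \<noteq> {}" using mI II' S' by (auto simp: sat_def)
        show "\<forall>j\<in>I - S'. 0 < g j" using Suc(4) by auto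
        show "\<forall>j\<in>I - S'. ?r j < ?s S'" using S' II' \<open>?s S' > ?r m\<close> by (auto simp: sat_def)
      qed
      moreover note eqI
      ultimately show ?thesis using le \<open>?s S' > ?r m\<close> by simp
    next
      case False
      then show ?thesis using nmS sS S'u by blast
    qed
    then show ?thesis using satS' by blast
  next
    case False
    have "I' - S' = {}"
    proof (rule ccontr)
      assume "I' - S' \<noteq> {}"
      then obtain j where j: "j \<in> I' - S'" by auto
      hence "?s S' > ?r j" using S' by (simp add: sat_def)
      moreover have "?r m \<le> ?r j" using mmin j II' by auto
      ultimately show False using False by simp
    qed
    hence S'I': "S' = I'" using S' by (auto simp: sat_def)
    have le: "?s I \<le> ?r m"
      unfolding II'(1)
      apply (rule sg_ins)
      using fI' II' Suc(4) den False S'I' apply auto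
      using den[of I] II' fI' by simp
    have satI: "sat T D l g I I" using le mmin by (auto simp: sat_def)
    have "S = I" if sS: "sat T D l g I S" for S
    proof (cases "m \<in> S")
      case True
      then show ?thesis using mS sS by blast
    next
      case False
      hence "S = I'" using nmS sS S'u S'I' by blast
      hence "?s I' > ?r m" using sS II' by (auto simp: sat_def)
      thus ?thesis using \<open>\<not> ?s S' > ?r m\<close> S'I' by simp
    qed
    then show ?thesis using satI by blast
  qed
qed

theorem lemma5:
  fixes y :: "nat \<Rightarrow> real^'d" and \<rho> :: "nat \<Rightarrow> nat \<Rightarrow> real" and N K :: nat
  assumes "CARD('d) \<ge> 2" and "N \<ge> 1" and "K \<ge> 1"
    and "\<And>k i. k \<in> {1..K} \<Longrightarrow> i \<in> {1..N} \<Longrightarrow> \<rho> k i \<ge> 0"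
    and "\<And>i. i \<in> {1..N} \<Longrightarrow> (\<Sum>k\<in>{1..K}. \<rho> k i) = 1"
    and "\<And>k. k \<in> {1..K} \<Longrightarrow> gam N \<rho> k > 0"
  shows "\<exists>!S. saturated K N y \<rho> S"
proof -
  let ?D = "real CARD('d) * real N"
  have eq: "saturated K N y \<rho> S \<longleftrightarrow> sat (frob_sq N y) ?D (lam N y \<rho>) (gam N \<rho>) {1..K} S" for S
    by (auto simp: saturated_def Vset_def sat_def sg_def sigma2_def)
  have tot: "sum (gam N \<rho>) {1..K} = real N"
  proof -
    have "sum (gam N \<rho>) {1..K} = (\<Sum>i\<in>{1..N}. \<Sum>k\<in>{1..K}. \<rho> k i)"
      unfolding gam_def by (rule sum.swap)
    also have "\<dots> = (\<Sum>i\<in>{1..N}. 1)" using assms(5) by simp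
    finally show ?thesis by simp
  qed
  have "?D \<ge> 2 * real N" using assms(1) by (simp add: mult_right_mono)
  have den: "?D - sum (gam N \<rho>) S > 0" if "S \<subseteq> {1..K}" for S
  proof -
    have "sum (gam N \<rho>) S \<le> sum (gam N \<rho>) {1..K}"
      using that assms(6) by (intro sum_mono2) (auto intro: less_imp_le)
    moreover have "real N \<ge> 1" using assms(2) by simp
    ultimately show ?thesis using tot \<open>?D \<ge> 2 * real N\<close> by linarith
  qed
  have "\<exists>!S. sat (frob_sq N y) ?D (lam N y \<rho>) (gam N \<rho>) {1..K} S"
    by (rule sat_unique) (use assms(6) den in auto)
  thus ?thesis using eq by simp
qed

end
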